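(* Let $G$ be a unimodular amenable locally compact group with Haar measure $m$, let $(A_i)_{i\in\mathbb I}$ be a strong Følner net in $G$, and let $\nu$ be an upper translation bounded measure on $G$. Then for all $K,L\in\mathcal K$ the following limits exist and \[ \sup_{K,L\in \mathcal K}\lim_{i\in \mathbb I} \sup_{s\in G} \frac{\nu(L \delta^K A_is)}{m(A_i)} = \sup_{K,L\in \mathcal K}\lim_{i\in \mathbb I} \sup_{s\in G}\frac{\nu(L \partial_K A_is)}{m(A_i)} = \sup_{K,L\in \mathcal K}\lim_{i\in \mathbb I} \sup_{s\in G}\frac{\nu(L \partial^K A_is)}{m(A_i)} = 0 . \]
   Context: A measure is a positive Borel measure; $\nu$ is upper translation bounded if $\sup_{x\in G}\nu(Bx)<\infty$ for some compact symmetric unit neighborhood $B$. $\mathcal K$: nonempty compact subsets of $G$; $\mathcal K_p$: those of positive Haar measure. Nets are indexed by a directed partially ordered set $(\mathbb I,\prec)$. For $K,A\subseteq G$ with $A^c=G\setminus A$: $\delta^KA=KA\,\triangle\,A$; $\partial^KA=(KA\cap \overline{A^c})\cup (K^{-1} \overline{A^c}\cap A)$; $\partial_K A=K^{-1}A\cap K^{-1}A^c$. A strong Følner net is a net $(A_i)$ in $\mathcal K_p$ with $\lim_i m(\partial_KA_i)/m(A_i)=0$ for every $K\in\mathcal K$. $G$ is amenable if it admits a left-invariant mean on $L^\infty(G)$. *)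

theory Defs
  imports "HOL-Analysis.Analysis"
begin

text \<open>The group G is a type of class topological_group_add (a possibly
non-commutative topological group, written additively: the paper's product xy
is x + y, the inverse x^-1 is -x, the unit is 0) which is moreover Hausdorff
(t2_space) and locally compact.\<close>

definition set_prod :: "'g::plus set \<Rightarrow> 'g set \<Rightarrow> 'g set" where
  "set_prod K A = {k + a | k a. k \<in> K \<and> a \<in> A}"

definition rtrans :: "'g::plus set \<Rightarrow> 'g \<Rightarrow> 'g set" where
  "rtrans A s = (\<lambda>a. a + s) ` A"

definition set_inv :: "'g::uminus set \<Rightarrow> 'g set" where
  "set_inv K = uminus ` K"

definition bd_delta :: "'g::plus set \<Rightarrow> 'g set \<Rightarrow> 'g set" where
  "bd_delta K A = (set_prod K A - A) \<union> (A - set_prod K A)"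

definition bd_upper :: "'g::{plus,uminus,topological_space} set \<Rightarrow> 'g set \<Rightarrow> 'g set" where
  "bd_upper K A = (set_prod K A \<inter> closure (- A)) \<union> (set_prod (set_inv K) (closure (- A)) \<inter> A)"

definition bd_lower :: "'g::{plus,uminus} set \<Rightarrow> 'g set \<Rightarrow> 'g set" where
  "bd_lower K A = set_prod (set_inv K) A \<inter> set_prod (set_inv K) (- A)"

text \<open>Outer measure, used to evaluate a Borel measure on arbitrary sets.\<close>
definition outer_meas :: "'a measure \<Rightarrow> 'a set \<Rightarrow> ennreal" where
  "outer_meas \<nu> E = (INF U \<in> {U. U \<in> sets \<nu> \<and> E \<subseteq> U}. emeasure \<nu> U)"

definition haar_measure :: "'g::{topological_group_add} measure \<Rightarrow> bool" where
  "haar_measure m \<longleftrightarrow>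
     sets m = sets borel \<and>
     (\<forall>x A. A \<in> sets borel \<longrightarrow> emeasure m ((\<lambda>a. x + a) ` A) = emeasure m A) \<and>
     (\<forall>K. compact K \<longrightarrow> emeasure m K < \<infinity>) \<and>
     (\<forall>U. open U \<and> U \<noteq> {} \<longrightarrow> emeasure m U > 0) \<and>
     (\<forall>A \<in> sets borel. emeasure m A = (INF U \<in> {U. open U \<and> A \<subseteq> U}. emeasure m U)) \<and>
     (\<forall>U. open U \<longrightarrow> emeasure m U = (SUP K \<in> {K. compact K \<and> K \<subseteq> U}. emeasure m K))"

definition unimodular :: "'g::{topological_group_add} measure \<Rightarrow> bool" where
  "unimodular m \<longleftrightarrow>
     (\<forall>x A. A \<in> sets borel \<longrightarrow> emeasure m ((\<lambda>a. a + x) ` A) = emeasure m A)"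

definition Linf :: "'g measure \<Rightarrow> ('g \<Rightarrow> real) \<Rightarrow> bool" where
  "Linf m f \<longleftrightarrow> f \<in> borel_measurable m \<and> (\<exists>C. AE y in m. \<bar>f y\<bar> \<le> C)"

definition left_inv_mean :: "'g::{topological_group_add} measure \<Rightarrow> (('g \<Rightarrow> real) \<Rightarrow> real) \<Rightarrow> bool" where
  "left_inv_mean m M \<longleftrightarrow>
     (\<forall>f g a b. Linf m f \<and> Linf m g \<longrightarrow> M (\<lambda>y. a * f y + b * g y) = a * M f + b * M g) \<and>
     (\<forall>f g. Linf m f \<and> Linf m g \<and> (AE y in m. f y = g y) \<longrightarrow> M f = M g) \<and>
     (\<forall>f. Linf m f \<and> (AE y in m. f y \<ge> 0) \<longrightarrow> M f \<ge> 0) \<and>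
     M (\<lambda>y. 1) = 1 \<and>
     (\<forall>f x. Linf m f \<longrightarrow> M (\<lambda>y. f (x + y)) = M f)"

definition amenable :: "'g::{topological_group_add} measure \<Rightarrow> bool" where
  "amenable m \<longleftrightarrow> (\<exists>M. left_inv_mean m M)"

definition strong_foelner :: "'g::{topological_group_add} measure \<Rightarrow> ('i::order \<Rightarrow> 'g set) \<Rightarrow> bool" where
  "strong_foelner m A \<longleftrightarrow>
     (\<forall>i. compact (A i) \<and> A i \<noteq> {} \<and> emeasure m (A i) > 0) \<and>
     (\<forall>K. compact K \<and> K \<noteq> {} \<longrightarrow>
        ((\<lambda>i. measure m (bd_lower K (A i)) / measure m (A i)) \<longlongrightarrow> 0) at_top)"

definition upper_translation_bounded :: "'g::{topological_group_add} measure \<Rightarrow> bool" where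
  "upper_translation_bounded \<nu> \<longleftrightarrow>
     sets \<nu> = sets borel \<and>
     (\<exists>B. compact B \<and> set_inv B = B \<and> 0 \<in> interior B \<and>
          (SUP x. emeasure \<nu> (rtrans B x)) < \<infinity>)"

end

theory Submission
  imports Defs
begin


lemma open_ltrans:
  fixes U :: "'g::topological_group_add set"
  assumes "open U" shows "open ((\<lambda>a. k + a) ` U)"
proof -
  have "(\<lambda>a. k + a) ` U = (\<lambda>y. -k + y) -` U"
  proof (intro set_eqI iffI)
    fix y assume "y \<in> (\<lambda>a. k + a) ` U"
    then obtain a where "a \<in> U" "y = k + a" by blast
    thus "y \<in> (\<lambda>y. -k + y) -` U" by (simp add: add.assoc[symmetric])
  next
    fix y assume "y \<in> (\<lambda>y. -k + y) -` U"
    hence "-k + y \<in> U" by simp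
    moreover have "y = k + (-k + y)" by (simp add: add.assoc[symmetric])
    ultimately show "y \<in> (\<lambda>a. k + a) ` U" by blast
  qed
  moreover have "open ((\<lambda>y. -k + y) -` U)"
    by (rule open_vimage[OF assms]) (intro continuous_intros)
  ultimately show ?thesis by simp
qed

lemma open_rtrans:
  fixes U :: "'g::topological_group_add set"
  assumes "open U" shows "open (rtrans U k)"
proof -
  have "rtrans U k = (\<lambda>y. y + -k) -` U"
    unfolding rtrans_def
  proof (intro set_eqI iffI)
    fix y assume "y \<in> (\<lambda>a. a + k) ` U"
    then obtain a where "a \<in> U" "y = a + k" by blast
    thus "y \<in> (\<lambda>y. y + -k) -` U" by (simp add: add.assoc)
  next
    fix y assume "y \<in> (\<lambda>y. y + -k) -` U"
    hence "y + -k \<in> U" by simp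
    moreover have "y = (y + -k) + k" by (simp add: add.assoc)
    ultimately show "y \<in> (\<lambda>a. a + k) ` U" by blast
  qed
  moreover have "open ((\<lambda>y. y + -k) -` U)"
    by (rule open_vimage[OF assms]) (intro continuous_intros)
  ultimately show ?thesis by simp
qed

lemma borel_rtrans:
  fixes R :: "'g::topological_group_add set"
  assumes "R \<in> sets borel" shows "rtrans R k \<in> sets borel"
proof -
  have "rtrans R k = (\<lambda>y. y + -k) -` R \<inter> space borel"
    unfolding rtrans_def
  proof (intro set_eqI iffI)
    fix y assume "y \<in> (\<lambda>a. a + k) ` R"
    then obtain a where "a \<in> R" "y = a + k" by blast
    thus "y \<in> (\<lambda>y. y + -k) -` R \<inter> space borel" by (simp add: add.assoc)
  next
    fix y assume "y \<in> (\<lambda>y. y + -k) -` R \<inter> space borel"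
    hence "y + -k \<in> R" by simp
    moreover have "y = (y + -k) + k" by (simp add: add.assoc)
    ultimately show "y \<in> (\<lambda>a. a + k) ` R" by blast
  qed
  moreover have "(\<lambda>y. y + -k) \<in> borel_measurable borel"
    by (intro borel_measurable_continuous_onI continuous_intros)
  ultimately show ?thesis using assms by (metis measurable_sets)
qed

lemma compact_set_prod:
  fixes K A :: "'g::topological_group_add set"
  assumes "compact K" "compact A" shows "compact (set_prod K A)"
proof -
  have "set_prod K A = (\<lambda>p. fst p + snd p) ` (K \<times> A)"
    unfolding set_prod_def by force
  moreover have "compact ((\<lambda>p. fst p + snd p) ` (K \<times> A))"
    by (intro compact_continuous_image compact_Times assms continuous_intros)
  ultimately show ?thesis by simp
qed

lemma compact_set_inv:
  fixes K :: "'g::topological_group_add set"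
  assumes "compact K" shows "compact (set_inv K)"
  unfolding set_inv_def by (intro compact_continuous_image assms continuous_intros)

lemma set_inv_inv: "set_inv (set_inv (K::'g::group_add set)) = K"
  unfolding set_inv_def by (simp add: image_image)

lemma open_set_prod:
  fixes K U :: "'g::topological_group_add set"
  assumes "open U" shows "open (set_prod K U)"
proof -
  have "set_prod K U = (\<Union>k\<in>K. (\<lambda>a. k + a) ` U)" unfolding set_prod_def by auto
  thus ?thesis using open_ltrans[OF assms] by auto
qed

lemma set_prod_assoc:
  "set_prod P (set_prod Q S) = set_prod (set_prod P Q) (S::'g::semigroup_add set)"
  unfolding set_prod_def by (auto simp: add.assoc) (metis add.assoc, metis add.assoc)

lemma set_prod_mono: "P \<subseteq> P' \<Longrightarrow> S \<subseteq> S' \<Longrightarrow> set_prod P S \<subseteq> set_prod P' S'"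
  unfolding set_prod_def by blast

lemma closure_sub:
  fixes B S :: "'g::topological_group_add set"
  assumes "0 \<in> interior B" "set_inv B = B"
  shows "closure S \<subseteq> set_prod B S"
proof
  fix x assume x: "x \<in> closure S"
  have "open (rtrans (interior B) x)" by (rule open_rtrans) simp
  moreover have "x \<in> rtrans (interior B) x" using assms(1) unfolding rtrans_def by force
  ultimately obtain s where s: "s \<in> S" "s \<in> rtrans (interior B) x"
    using x unfolding closure_iff_nhds_not_empty by blast
  then obtain b where b: "b \<in> B" "s = b + x" unfolding rtrans_def using interior_subset by blast
  have "-b \<in> B" using b(1) assms(2) unfolding set_inv_def by blast
  moreover have "x = -b + s" using b by (simp add: add.assoc[symmetric])
  ultimately show "x \<in> set_prod B S" unfolding set_prod_def using s(1) by blast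
qed

lemma exists_V:
  fixes B :: "'g::topological_group_add set"
  assumes "0 \<in> interior B"
  obtains V where "open V" "0 \<in> V" "V \<subseteq> B" "set_prod (set_inv V) V \<subseteq> B"
proof -
  let ?f = "\<lambda>p::'g\<times>'g. - fst p + snd p"
  have "continuous_on UNIV ?f" by (intro continuous_intros)
  hence "open (?f -` interior B)" by (rule open_vimage[rotated]) simp
  moreover have "(0,0) \<in> ?f -` interior B" using assms by simp
  ultimately obtain U1 U2 where U: "open U1" "open U2" "(0,0) \<in> U1 \<times> U2" "U1 \<times> U2 \<subseteq> ?f -` interior B"
    by (rule open_prod_elim)
  define V where "V = U1 \<inter> U2 \<inter> interior B"
  have "open V" using U by (simp add: V_def open_Int)
  moreover have "0 \<in> V" using U assms by (simp add: V_def)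
  moreover have "V \<subseteq> B" using interior_subset by (auto simp: V_def)
  moreover have "set_prod (set_inv V) V \<subseteq> B"
  proof
    fix z assume "z \<in> set_prod (set_inv V) V"
    then obtain a b where "a \<in> V" "b \<in> V" "z = -a + b" unfolding set_prod_def set_inv_def by blast
    hence "(a,b) \<in> U1 \<times> U2" by (auto simp: V_def)
    hence "z \<in> interior B" using U(4) \<open>z = -a + b\<close> by auto
    thus "z \<in> B" using interior_subset by blast
  qed
  ultimately show ?thesis using that by blast
qed



lemma cover_bound:
  fixes m \<nu> :: "'g::topological_group_add measure" and V B R E :: "'g set" and C :: real
  assumes sm: "sets m = sets borel" and sn: "sets \<nu> = sets borel"
   and Vb: "V \<in> sets borel" and Vpos: "0 < emeasure m V" and Vfin: "emeasure m V < \<infinity>"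
   and Vinv: "\<forall>x. emeasure m (rtrans V x) = emeasure m V"
   and VB: "set_prod (set_inv V) V \<subseteq> B"
   and Bb: "\<forall>y. rtrans B y \<in> sets borel"
   and Cb: "\<forall>y. emeasure \<nu> (rtrans B y) \<le> ennreal C" and C0: "0 \<le> C"
   and Rb: "R \<in> sets borel" and Rfin: "emeasure m R < \<infinity>"
   and ER: "\<forall>x\<in>E. rtrans V x \<subseteq> R"
  shows "outer_meas \<nu> E \<le> ennreal (C * measure m R / measure m V)"
proof -
  define Fam where "Fam = {F. finite F \<and> F \<subseteq> E \<and> disjoint_family_on (rtrans V) F}"
  have eV: "emeasure m V = ennreal (measure m V)" using Vfin by (intro emeasure_eq_ennreal_measure) auto
  have eR: "emeasure m R = ennreal (measure m R)" using Rfin by (intro emeasure_eq_ennreal_measure) auto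
  have mVpos: "measure m V > 0" using Vpos eV by (metis ennreal_less_zero_iff)
  have cardb: "real (card F) * measure m V \<le> measure m R" if F: "F \<in> Fam" for F
  proof -
    have fin: "finite F" and FE: "F \<subseteq> E" and dj: "disjoint_family_on (rtrans V) F"
      using F by (auto simp: Fam_def)
    have sub: "rtrans V ` F \<subseteq> sets m" using borel_rtrans[OF Vb] sm by auto
    have "ennreal (real (card F) * measure m V) = (\<Sum>x\<in>F. emeasure m (rtrans V x))"
      using Vinv eV by (simp add: ennreal_mult ennreal_of_nat_eq_real_of_nat C0)
    also have "\<dots> = emeasure m (\<Union>x\<in>F. rtrans V x)" by (rule sum_emeasure[OF sub dj fin])
    also have "\<dots> \<le> emeasure m R" using ER FE Rb sm by (intro emeasure_mono) auto
    finally show ?thesis using eR by simp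
  qed
  have bnd: "card F \<le> nat \<lceil>measure m R / measure m V\<rceil>" if "F \<in> Fam" for F
  proof -
    have "real (card F) \<le> measure m R / measure m V"
      using cardb[OF that] mVpos by (simp add: field_simps)
    thus ?thesis by linarith
  qed
  have "{} \<in> Fam" by (simp add: Fam_def disjoint_family_on_def)
  have finc: "finite (card ` Fam)"
    by (rule finite_subset[of _ "{..nat \<lceil>measure m R / measure m V\<rceil>}"]) (use bnd in auto)
  define n where "n = Max (card ` Fam)"
  have "n \<in> card ` Fam" unfolding n_def using finc \<open>{} \<in> Fam\<close> by (intro Max_in) auto
  then obtain F where F: "F \<in> Fam" "card F = n" by auto
  have maxF: "card G \<le> card F" if "G \<in> Fam" for G
    using F(2) finc that unfolding n_def by simp
  have fin: "finite F" and FE: "F \<subseteq> E" and dj: "disjoint_family_on (rtrans V) F"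
    using F by (auto simp: Fam_def)
  have "V \<noteq> {}" using Vpos by auto
  then obtain v0 where v0: "v0 \<in> V" by auto
  have cov: "\<exists>y\<in>F. x \<in> rtrans B y" if x: "x \<in> E" for x
  proof (cases "\<exists>y\<in>F. rtrans V x \<inter> rtrans V y \<noteq> {}")
    case True
    then obtain y z where y: "y \<in> F" "z \<in> rtrans V x" "z \<in> rtrans V y" by blast
    then obtain v v' where vv: "v \<in> V" "v' \<in> V" "z = v + x" "z = v' + y" unfolding rtrans_def by blast
    have "x = (-v + v') + y" using vv(3,4) by (metis add.assoc minus_add_cancel)
    moreover have "-v + v' \<in> B" using VB vv(1,2) unfolding set_prod_def set_inv_def by blast
    ultimately show ?thesis using y(1) unfolding rtrans_def by blast
  next
    case False
    have xF: "x \<notin> F"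
    proof
      assume "x \<in> F"
      moreover have "v0 + x \<in> rtrans V x" using v0 unfolding rtrans_def by blast
      ultimately show False using False by blast
    qed
    have "insert x F \<in> Fam" using fin FE x dj False xF
      by (auto simp: Fam_def disjoint_family_on_insert)
    hence "card (insert x F) \<le> card F" by (rule maxF)
    thus ?thesis using fin xF by simp
  qed
  define U where "U = (\<Union>y\<in>F. rtrans B y)"
  have Usets: "rtrans B ` F \<subseteq> sets \<nu>" using Bb sn by auto
  have "U \<in> sets \<nu>" unfolding U_def using Usets fin by auto
  moreover have "E \<subseteq> U" using cov unfolding U_def by blast
  ultimately have "outer_meas \<nu> E \<le> emeasure \<nu> U"
    unfolding outer_meas_def by (intro INF_lower) auto
  also have "\<dots> \<le> (\<Sum>y\<in>F. emeasure \<nu> (rtrans B y))"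
    unfolding U_def by (rule emeasure_subadditive_finite[OF fin Usets])
  also have "\<dots> \<le> (\<Sum>y\<in>F. ennreal C)" using Cb by (intro sum_mono) auto
  also have "\<dots> = ennreal (real (card F) * C)" by (simp add: ennreal_mult ennreal_of_nat_eq_real_of_nat C0)
  also have "\<dots> \<le> ennreal (C * measure m R / measure m V)"
  proof (rule ennreal_leI)
    have "real (card F) \<le> measure m R / measure m V"
      using cardb[OF F(1)] mVpos by (simp add: field_simps)
    thus "real (card F) * C \<le> C * measure m R / measure m V"
      using C0 by (metis mult.commute mult_left_mono times_divide_eq_right)
  qed
  finally show ?thesis .
qed



lemma at_top_nontriv:
  assumes directed: "\<forall>a b :: 'i::order. \<exists>c. a \<le> c \<and> b \<le> c"
  shows "(at_top :: 'i filter) \<noteq> bot"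
proof
  assume "(at_top :: 'i filter) = bot"
  hence ev: "eventually (\<lambda>_. False) (at_top :: 'i filter)" by simp
  have dir: "\<exists>x\<in>UNIV. principal {x..} \<le> inf (principal {a..}) (principal {b..})" for a b :: 'i
  proof -
    obtain c where "a \<le> c" "b \<le> c" using directed by blast
    hence "{c..} \<subseteq> {a..} \<inter> {b..}" by auto
    thus ?thesis by (auto simp: inf_principal)
  qed
  have "eventually (\<lambda>_. False) (at_top :: 'i filter) \<longleftrightarrow> (\<exists>k\<in>UNIV. eventually (\<lambda>_. False) (principal {k::'i..}))"
    unfolding at_top_def by (rule eventually_INF_base) (use dir in auto)
  thus False using ev by (auto simp: eventually_principal)
qed

lemma sub_prod: 
  assumes "Z \<subseteq> set_prod MM A \<inter> set_prod MM (-A)"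
  shows "set_prod P Z \<subseteq> set_prod (set_prod P MM) A \<inter> set_prod (set_prod P MM) (-(A::'g::semigroup_add set))"
  using set_prod_mono[OF order_refl assms, of P] set_prod_assoc[of P MM]
  by (metis Int_subset_iff set_prod_mono[OF order_refl] inf.cobounded1 inf.cobounded2 order_trans)

lemma delta_sub:
  fixes K A :: "'g::group_add set"
  assumes "K \<noteq> {}"
  shows "bd_delta K A \<subseteq> set_prod (insert 0 K) A \<inter> set_prod (insert 0 K) (-A)"
proof
  fix x assume x: "x \<in> bd_delta K A"
  from assms obtain k0 where k0: "k0 \<in> K" by auto
  show "x \<in> set_prod (insert 0 K) A \<inter> set_prod (insert 0 K) (-A)"
  proof (cases "x \<in> A")
    case True
    hence "x \<notin> set_prod K A" using x unfolding bd_delta_def by auto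
    hence "-k0 + x \<notin> A" using k0 unfolding set_prod_def
      by (metis (mono_tags, lifting) add_minus_cancel mem_Collect_eq)
    moreover have "x = k0 + (-k0 + x)" by (simp add: add.assoc[symmetric])
    ultimately have "x \<in> set_prod (insert 0 K) (-A)" using k0 unfolding set_prod_def by blast
    moreover have "x \<in> set_prod (insert 0 K) A" using True unfolding set_prod_def
      by (metis (mono_tags, lifting) add_0 insertI1 mem_Collect_eq)
    ultimately show ?thesis by blast
  next
    case False
    hence "x \<in> set_prod K A" using x unfolding bd_delta_def by auto
    hence "x \<in> set_prod (insert 0 K) A" unfolding set_prod_def by blast
    moreover have "x \<in> set_prod (insert 0 K) (-A)" using False unfolding set_prod_def
      by (metis (mono_tags, lifting) ComplI add_0 insertI1 mem_Collect_eq)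
    ultimately show ?thesis by blast
  qed
qed

lemma lower_sub:
  fixes K A :: "'g::group_add set"
  shows "bd_lower K A \<subseteq> set_prod (set_inv K) A \<inter> set_prod (set_inv K) (-A)"
  unfolding bd_lower_def by simp

lemma upper_sub:
  fixes K A B :: "'g::topological_group_add set"
  assumes "0 \<in> interior B" "set_inv B = B"
  shows "bd_upper K A \<subseteq> set_prod (insert 0 (K \<union> set_prod (set_inv K) B \<union> B)) A
            \<inter> set_prod (insert 0 (K \<union> set_prod (set_inv K) B \<union> B)) (-A)"
    (is "_ \<subseteq> set_prod ?M _ \<inter> set_prod ?M _")
proof -
  have cl: "closure (-A) \<subseteq> set_prod B (-A)" by (rule closure_sub[OF assms])
  have A0: "A \<subseteq> set_prod ?M A" unfolding set_prod_def by force
  have 1: "set_prod K A \<subseteq> set_prod ?M A" by (rule set_prod_mono) auto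
  have 2: "closure (-A) \<subseteq> set_prod ?M (-A)"
    using cl set_prod_mono[of B ?M "-A" "-A"] by auto
  have "set_prod (set_inv K) (closure (-A)) \<subseteq> set_prod (set_inv K) (set_prod B (-A))"
    by (rule set_prod_mono[OF order_refl cl])
  also have "\<dots> = set_prod (set_prod (set_inv K) B) (-A)" by (rule set_prod_assoc)
  also have "\<dots> \<subseteq> set_prod ?M (-A)" by (rule set_prod_mono) auto
  finally have 3: "set_prod (set_inv K) (closure (-A)) \<subseteq> set_prod ?M (-A)" .
  show ?thesis unfolding bd_upper_def using A0 1 2 3 by blast
qed



lemma main_tendsto:
  fixes m \<nu> :: "'g::{topological_group_add, t2_space} measure"
    and A :: "'i::order \<Rightarrow> 'g set" and S :: "'i \<Rightarrow> 'g set"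
  assumes haar: "haar_measure m"
    and unimod: "unimodular m"
    and foelner: "strong_foelner m A"
    and Bc: "compact B" and Bs: "set_inv B = B" and B0: "0 \<in> interior B"
    and Bfin: "(SUP x. emeasure \<nu> (rtrans B x)) < \<infinity>"
    and sn: "sets \<nu> = sets borel"
    and Mc: "compact M" and Mne: "M \<noteq> {}"
    and SM: "\<forall>i. set_prod B (S i) \<subseteq> set_prod M (A i) \<inter> set_prod M (- A i)"
  shows "((\<lambda>i. SUP s. outer_meas \<nu> (rtrans (S i) s) / emeasure m (A i)) \<longlongrightarrow> 0) at_top"
proof -
  obtain sm: "sets m = sets borel" and cfin0: "\<forall>K. compact K \<longrightarrow> emeasure m K < \<infinity>"
      and opos0: "\<forall>U. open U \<and> U \<noteq> {} \<longrightarrow> emeasure m U > 0"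
  proof -
    note hd = haar[unfolded haar_measure_def]
    show ?thesis by (rule that[OF conjunct1[OF hd] conjunct1[OF conjunct2[OF conjunct2[OF hd]]]
          conjunct1[OF conjunct2[OF conjunct2[OF conjunct2[OF hd]]]]])
  qed
  have opos: "\<And>U. open U \<Longrightarrow> U \<noteq> {} \<Longrightarrow> emeasure m U > 0" using opos0 by blast
  have cfin: "\<And>K. compact K \<Longrightarrow> emeasure m K < \<infinity>" using cfin0 by blast
  have rinv: "\<And>R x. R \<in> sets borel \<Longrightarrow> emeasure m (rtrans R x) = emeasure m R"
    using unimod by (simp add: unimodular_def rtrans_def)
  define C where "C = enn2real (SUP x. emeasure \<nu> (rtrans B x))"
  have C0: "0 \<le> C" by (simp add: C_def)
  have Cb: "\<forall>y. emeasure \<nu> (rtrans B y) \<le> ennreal C"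
  proof
    fix y
    have "emeasure \<nu> (rtrans B y) \<le> (SUP x. emeasure \<nu> (rtrans B x))" by (rule SUP_upper) auto
    also have "\<dots> = ennreal C" unfolding C_def using Bfin by (simp add: less_top[symmetric])
    finally show "emeasure \<nu> (rtrans B y) \<le> ennreal C" .
  qed
  obtain V where V: "open V" "0 \<in> V" "V \<subseteq> B" "set_prod (set_inv V) V \<subseteq> B"
    using exists_V[OF B0] by blast
  have Bb: "B \<in> sets borel" using Bc by (simp add: borel_closed compact_imp_closed)
  have Vb: "V \<in> sets borel" using V(1) by (simp add: borel_open)
  have Vpos: "0 < emeasure m V" using opos V by auto
  have "emeasure m V \<le> emeasure m B" using V(3) Bb sm by (intro emeasure_mono) auto
  hence Vfin: "emeasure m V < \<infinity>" using cfin[OF Bc] by auto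
  have Vinv: "\<forall>x. emeasure m (rtrans V x) = emeasure m V" using rinv Vb by auto
  have BBb: "\<forall>y. rtrans B y \<in> sets borel" using borel_rtrans[OF Bb] by auto
  define D where "D i = set_prod M (A i) \<inter> set_prod M (- A i)" for i
  have Ac: "compact (A i)" for i using foelner by (simp add: strong_foelner_def)
  have Db: "D i \<in> sets borel" for i
  proof -
    have "closed (set_prod M (A i))" by (intro compact_imp_closed compact_set_prod Mc Ac)
    moreover have "open (set_prod M (- A i))"
      by (intro open_set_prod) (simp add: open_Compl compact_imp_closed Ac)
    ultimately show ?thesis unfolding D_def by (simp add: borel_closed borel_open sets.Int)
  qed
  have Dfin: "emeasure m (D i) < \<infinity>" for i
  proof -
    have "emeasure m (D i) \<le> emeasure m (set_prod M (A i))"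
      unfolding D_def using sm by (intro emeasure_mono)
        (auto simp: borel_closed compact_imp_closed compact_set_prod Mc Ac)
    thus ?thesis using cfin[OF compact_set_prod[OF Mc Ac[of i]]] by (meson order.strict_trans1)
  qed
  have bound: "outer_meas \<nu> (rtrans (S i) s) \<le> ennreal (C * measure m (D i) / measure m V)" for i s
  proof -
    have eq: "emeasure m (rtrans (D i) s) = emeasure m (D i)" using rinv Db by auto
    have "outer_meas \<nu> (rtrans (S i) s) \<le> ennreal (C * measure m (rtrans (D i) s) / measure m V)"
    proof (rule cover_bound[OF sm sn Vb Vpos Vfin Vinv V(4) BBb Cb C0 borel_rtrans[OF Db]])
      show "emeasure m (rtrans (D i) s) < \<infinity>" using eq Dfin by simp
      show "\<forall>x\<in>rtrans (S i) s. rtrans V x \<subseteq> rtrans (D i) s"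
      proof (intro ballI subsetI)
        fix x y assume x: "x \<in> rtrans (S i) s" and y: "y \<in> rtrans V x"
        obtain z where z: "z \<in> S i" "x = z + s" using x unfolding rtrans_def by blast
        obtain v where v: "v \<in> V" "y = v + x" using y unfolding rtrans_def by blast
        have "v + z \<in> set_prod B (S i)" using v(1) V(3) z(1) unfolding set_prod_def by blast
        hence "v + z \<in> D i" using SM unfolding D_def by blast
        moreover have "y = (v + z) + s" using v z by (simp add: add.assoc)
        ultimately show "y \<in> rtrans (D i) s" unfolding rtrans_def by blast
      qed
    qed
    moreover have "measure m (rtrans (D i) s) = measure m (D i)" using eq by (simp add: measure_def)
    ultimately show ?thesis by simp
  qed
  have Apos: "measure m (A i) > 0" for i
  proof -
    have "emeasure m (A i) > 0" using foelner by (simp add: strong_foelner_def)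
    moreover have "emeasure m (A i) < \<infinity>" using cfin[OF Ac[of i]] .
    moreover have "emeasure m (A i) = ennreal (measure m (A i))"
      using cfin[OF Ac[of i]] by (intro emeasure_eq_ennreal_measure) auto
    ultimately show ?thesis by simp
  qed
  have eA: "emeasure m (A i) = ennreal (measure m (A i))" for i
    using cfin[OF Ac[of i]] by (intro emeasure_eq_ennreal_measure) auto
  define g where "g i = ennreal (C / measure m V * (measure m (D i) / measure m (A i)))" for i
  have le: "(SUP s. outer_meas \<nu> (rtrans (S i) s) / emeasure m (A i)) \<le> g i" for i
  proof (rule SUP_least)
    fix s
    have "outer_meas \<nu> (rtrans (S i) s) / emeasure m (A i)
          \<le> ennreal (C * measure m (D i) / measure m V) / ennreal (measure m (A i))"
      unfolding eA[symmetric] by (intro divide_right_mono_ennreal bound)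
    also have "\<dots> = g i" unfolding g_def using Apos[of i] C0
      by (subst divide_ennreal) (auto simp: field_simps)
    finally show "outer_meas \<nu> (rtrans (S i) s) / emeasure m (A i) \<le> g i" .
  qed
  have Dlim: "((\<lambda>i. measure m (D i) / measure m (A i)) \<longlongrightarrow> 0) at_top"
  proof -
    have "compact (set_inv M)" "set_inv M \<noteq> {}" using Mc Mne compact_set_inv
      by (auto simp: set_inv_def)
    hence "((\<lambda>i. measure m (bd_lower (set_inv M) (A i)) / measure m (A i)) \<longlongrightarrow> 0) at_top"
      using foelner by (simp add: strong_foelner_def)
    moreover have "bd_lower (set_inv M) (A i) = D i" for i
      unfolding bd_lower_def D_def set_inv_inv ..
    ultimately show ?thesis by simp
  qed
  have glim: "(g \<longlongrightarrow> 0) at_top"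
  proof -
    have "((\<lambda>i. C / measure m V * (measure m (D i) / measure m (A i))) \<longlongrightarrow> C / measure m V * 0) at_top"
      by (intro tendsto_mult tendsto_const Dlim)
    hence "(g \<longlongrightarrow> ennreal (C / measure m V * 0)) at_top" unfolding g_def by (rule tendsto_ennrealI)
    thus ?thesis by simp
  qed
  show ?thesis
    by (rule tendsto_sandwich[OF _ _ tendsto_const glim]) (use le in auto)
qed



lemma set_prod_ne: "P \<noteq> {} \<Longrightarrow> Q \<noteq> {} \<Longrightarrow> set_prod P Q \<noteq> {}"
  unfolding set_prod_def by blast

lemma gen_tendsto:
  fixes m \<nu> :: "'g::{topological_group_add, t2_space} measure"
    and A :: "'i::order \<Rightarrow> 'g set" and Z :: "'i \<Rightarrow> 'g set"
  assumes haar: "haar_measure m"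
    and unimod: "unimodular m"
    and foelner: "strong_foelner m A"
    and Bc: "compact B" and Bs: "set_inv B = B" and B0: "0 \<in> interior B"
    and Bfin: "(SUP x. emeasure \<nu> (rtrans B x)) < \<infinity>"
    and sn: "sets \<nu> = sets borel"
    and MMc: "compact MM" and MMne: "MM \<noteq> {}" and Lc: "compact L" and Lne: "L \<noteq> {}"
    and ZM: "\<And>i. Z i \<subseteq> set_prod MM (A i) \<inter> set_prod MM (- A i)"
  shows "((\<lambda>i. SUP s. outer_meas \<nu> (rtrans (set_prod L (Z i)) s) / emeasure m (A i)) \<longlongrightarrow> 0) at_top"
proof (rule main_tendsto[OF haar unimod foelner Bc Bs B0 Bfin sn])
  show "compact (set_prod (set_prod B L) MM)" by (intro compact_set_prod Bc Lc MMc)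
  have "B \<noteq> {}" using B0 interior_subset by blast
  thus "set_prod (set_prod B L) MM \<noteq> {}" using Lne MMne by (intro set_prod_ne)
  show "\<forall>i. set_prod B (set_prod L (Z i)) \<subseteq> set_prod (set_prod (set_prod B L) MM) (A i) \<inter>
      set_prod (set_prod (set_prod B L) MM) (- A i)"
    using sub_prod[OF ZM, of "set_prod B L"] by (simp add: set_prod_assoc)
qed

lemma sup_zero:
  assumes "\<forall>x\<in>S. (f x :: ennreal) = 0" shows "(SUP x\<in>S. f x) = 0"
  using assms by (simp add: SUP_bot_conv bot_ennreal[symmetric])

theorem lemma5p10:
  fixes m \<nu> :: "'g::{topological_group_add, t2_space} measure"
    and A :: "'i::order \<Rightarrow> 'g set"
  assumes lc: "locally_compact_space (euclidean :: 'g topology)"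
    and haar: "haar_measure m"
    and unimod: "unimodular m"
    and amen: "amenable m"
    and directed: "\<forall>a b :: 'i. \<exists>c. a \<le> c \<and> b \<le> c"
    and foelner: "strong_foelner m A"
    and utb: "upper_translation_bounded \<nu>"
  shows
   "(\<forall>K L. compact K \<and> K \<noteq> {} \<and> compact L \<and> L \<noteq> {} \<longrightarrow>
       (\<exists>l. ((\<lambda>i. SUP s. outer_meas \<nu> (rtrans (set_prod L (bd_delta K (A i))) s) / emeasure m (A i)) \<longlongrightarrow> l) at_top)) \<and>
    (SUP KL \<in> {(K, L). compact K \<and> K \<noteq> {} \<and> compact L \<and> L \<noteq> {}}.
       Lim at_top (\<lambda>i. SUP s. outer_meas \<nu> (rtrans (set_prod (snd KL) (bd_delta (fst KL) (A i))) s) / emeasure m (A i))) = 0 \<and>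
    (\<forall>K L. compact K \<and> K \<noteq> {} \<and> compact L \<and> L \<noteq> {} \<longrightarrow>
       (\<exists>l. ((\<lambda>i. SUP s. outer_meas \<nu> (rtrans (set_prod L (bd_lower K (A i))) s) / emeasure m (A i)) \<longlongrightarrow> l) at_top)) \<and>
    (SUP KL \<in> {(K, L). compact K \<and> K \<noteq> {} \<and> compact L \<and> L \<noteq> {}}.
       Lim at_top (\<lambda>i. SUP s. outer_meas \<nu> (rtrans (set_prod (snd KL) (bd_lower (fst KL) (A i))) s) / emeasure m (A i))) = 0 \<and>
    (\<forall>K L. compact K \<and> K \<noteq> {} \<and> compact L \<and> L \<noteq> {} \<longrightarrow>
       (\<exists>l. ((\<lambda>i. SUP s. outer_meas \<nu> (rtrans (set_prod L (bd_upper K (A i))) s) / emeasure m (A i)) \<longlongrightarrow> l) at_top)) \<and>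
    (SUP KL \<in> {(K, L). compact K \<and> K \<noteq> {} \<and> compact L \<and> L \<noteq> {}}.
       Lim at_top (\<lambda>i. SUP s. outer_meas \<nu> (rtrans (set_prod (snd KL) (bd_upper (fst KL) (A i))) s) / emeasure m (A i))) = 0"
proof -
  obtain B where Bc: "compact B" and Bs: "set_inv B = B" and B0: "0 \<in> interior B"
      and Bfin: "(SUP x. emeasure \<nu> (rtrans B x)) < \<infinity>"
    using utb unfolding upper_translation_bounded_def by blast
  have sn: "sets \<nu> = sets borel" using utb unfolding upper_translation_bounded_def by blast
  have nt: "(at_top :: 'i filter) \<noteq> bot" by (rule at_top_nontriv[OF directed])
  have T1: "((\<lambda>i. SUP s. outer_meas \<nu> (rtrans (set_prod L (bd_delta K (A i))) s) / emeasure m (A i)) \<longlongrightarrow> 0) at_top"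
    if "compact K" "K \<noteq> {}" "compact L" "L \<noteq> {}" for K L
    by (rule gen_tendsto[OF haar unimod foelner Bc Bs B0 Bfin sn, where MM = "insert 0 K"])
      (use that delta_sub in auto)
  have T2: "((\<lambda>i. SUP s. outer_meas \<nu> (rtrans (set_prod L (bd_lower K (A i))) s) / emeasure m (A i)) \<longlongrightarrow> 0) at_top"
    if "compact K" "K \<noteq> {}" "compact L" "L \<noteq> {}" for K L
    by (rule gen_tendsto[OF haar unimod foelner Bc Bs B0 Bfin sn, where MM = "set_inv K"])
      (use that lower_sub compact_set_inv[OF that(1)] in \<open>auto simp: set_inv_def\<close>)
  have T3: "((\<lambda>i. SUP s. outer_meas \<nu> (rtrans (set_prod L (bd_upper K (A i))) s) / emeasure m (A i)) \<longlongrightarrow> 0) at_top"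
    if "compact K" "K \<noteq> {}" "compact L" "L \<noteq> {}" for K L
    by (rule gen_tendsto[OF haar unimod foelner Bc Bs B0 Bfin sn,
          where MM = "insert 0 (K \<union> set_prod (set_inv K) B \<union> B)"])
      (use that upper_sub[OF B0 Bs] compact_set_prod[OF compact_set_inv[OF that(1)] Bc] Bc in
        \<open>auto intro!: compact_Un compact_insert\<close>)
  show ?thesis
    apply (intro conjI)
         apply (blast intro: T1)
        apply (rule sup_zero) apply (auto intro!: tendsto_Lim[OF nt] T1)[1]
       apply (blast intro: T2)
      apply (rule sup_zero) apply (auto intro!: tendsto_Lim[OF nt] T2)[1]
     apply (blast intro: T3)
    apply (rule sup_zero) apply (auto intro!: tendsto_Lim[OF nt] T3)[1]
    done
qed

end
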